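(* Let $R$ be a principal ideal domain and $I$ an ideal of $R[X]$ with $I\cap R = Rd$. If the image of $I$ in $(R/dR)[X]$ is generated by a single element which is a non-zero-divisor of $(R/dR)[X]$, then $I$ is power stable.
   Context: An ideal $I$ of the polynomial ring $R[X]$ over an integral domain $R$ is called power stable if $I^t\cap R = (I\cap R)^t$ for all integers $t\geq 1$. *)

theory Defs
  imports "HOL-Computational_Algebra.Polynomial"
begin

definition is_ideal :: "'a::comm_ring_1 set \<Rightarrow> bool" where
  "is_ideal I \<longleftrightarrow> 0 \<in> I \<and> (\<forall>x\<in>I. \<forall>y\<in>I. x + y \<in> I) \<and> (\<forall>r x. x \<in> I \<longrightarrow> r * x \<in> I)"

definition ideal_of :: "'a::comm_ring_1 set \<Rightarrow> 'a set" where
  "ideal_of S = \<Inter>{J. is_ideal J \<and> S \<subseteq> J}"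

definition ideal_mult :: "'a::comm_ring_1 set \<Rightarrow> 'a set \<Rightarrow> 'a set" where
  "ideal_mult I J = ideal_of {x * y | x y. x \<in> I \<and> y \<in> J}"

fun ideal_pow :: "'a::comm_ring_1 set \<Rightarrow> nat \<Rightarrow> 'a set" where
  "ideal_pow I 0 = UNIV"
| "ideal_pow I (Suc n) = ideal_mult I (ideal_pow I n)"

definition principal :: "'a::comm_ring_1 \<Rightarrow> 'a set" where
  "principal a = {a * r | r. True}"

definition is_PID :: "'a::idom itself \<Rightarrow> bool" where
  "is_PID _ \<longleftrightarrow> (\<forall>I::'a set. is_ideal I \<longrightarrow> (\<exists>a. I = principal a))"

text \<open>Contraction I \<inter> R of an ideal of R[X] to R (constants identified with R).\<close>
definition contr :: "'a::comm_ring_1 poly set \<Rightarrow> 'a set" where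
  "contr I = {c. [:c:] \<in> I}"

definition power_stable :: "'a::comm_ring_1 poly set \<Rightarrow> bool" where
  "power_stable I \<longleftrightarrow> (\<forall>t::nat. t \<ge> 1 \<longrightarrow> contr (ideal_pow I t) = ideal_pow (contr I) t)"

text \<open>The kernel d R[X] of the reduction map R[X] \<rightarrow> (R/dR)[X].\<close>
definition dRX :: "'a::comm_ring_1 \<Rightarrow> 'a poly set" where
  "dRX d = {smult d h | h. True}"

text \<open>The image of I in (R/dR)[X] is generated by the class of f:
  equivalently I + dR[X] = f R[X] + dR[X].\<close>
definition image_generated_by :: "'a::comm_ring_1 poly set \<Rightarrow> 'a \<Rightarrow> 'a poly \<Rightarrow> bool" where
  "image_generated_by I d f \<longleftrightarrow>
     {a + b | a b. a \<in> I \<and> b \<in> dRX d} = {f * q + b | q b. b \<in> dRX d}"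

text \<open>The class of f is a non-zero-divisor of (R/dR)[X].\<close>
definition nzd_mod :: "'a::comm_ring_1 \<Rightarrow> 'a poly \<Rightarrow> bool" where
  "nzd_mod d f \<longleftrightarrow> (\<forall>g. g * f \<in> dRX d \<longrightarrow> g \<in> dRX d)"

end

theory Submission
  imports Defs
begin

lemma ideal_of_ideal: "is_ideal (ideal_of S)"
  unfolding is_ideal_def ideal_of_def by auto

lemma ideal_of_sup: "S \<subseteq> ideal_of S"
  unfolding ideal_of_def by auto

lemma ideal_of_min: "is_ideal J \<Longrightarrow> S \<subseteq> J \<Longrightarrow> ideal_of S \<subseteq> J"
  unfolding ideal_of_def by auto

lemma ideal_0: "is_ideal I \<Longrightarrow> 0 \<in> I"
  unfolding is_ideal_def by auto

lemma ideal_add: "is_ideal I \<Longrightarrow> x \<in> I \<Longrightarrow> y \<in> I \<Longrightarrow> x + y \<in> I"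
  unfolding is_ideal_def by auto

lemma ideal_mulL: "is_ideal I \<Longrightarrow> x \<in> I \<Longrightarrow> r * x \<in> I"
  unfolding is_ideal_def by auto

lemma ideal_mulR: "is_ideal I \<Longrightarrow> x \<in> I \<Longrightarrow> x * r \<in> I"
  unfolding is_ideal_def by (auto simp: mult.commute)

lemma ideal_mult_ideal: "is_ideal (ideal_mult I J)"
  unfolding ideal_mult_def by (rule ideal_of_ideal)

lemma ideal_mult_in: "x \<in> I \<Longrightarrow> y \<in> J \<Longrightarrow> x * y \<in> ideal_mult I J"
proof -
  assume "x \<in> I" "y \<in> J"
  then have "x * y \<in> {x * y | x y. x \<in> I \<and> y \<in> J}" by auto
  then show ?thesis unfolding ideal_mult_def using ideal_of_sup by (rule subsetD[rotated])
qed

lemma ideal_mult_sub: "is_ideal I \<Longrightarrow> ideal_mult I J \<subseteq> I"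
  unfolding ideal_mult_def
proof (rule ideal_of_min, assumption, rule subsetI)
  fix z assume I: "is_ideal I" and "z \<in> {x * y | x y. x \<in> I \<and> y \<in> J}"
  then obtain x y where "z = x * y" "x \<in> I" by auto
  then show "z \<in> I" using ideal_mulR[OF I] by simp
qed

lemma ideal_pow_ideal: "is_ideal (ideal_pow I n)"
proof (cases n)
  case 0 then show ?thesis by (simp add: is_ideal_def)
next
  case (Suc m) then show ?thesis by (simp add: ideal_mult_ideal)
qed

lemma principal_mem: "a * t \<in> principal a"
  unfolding principal_def by auto

lemma principal_ideal: "is_ideal (principal a)"
  unfolding is_ideal_def
proof (intro conjI ballI allI impI)
  show "0 \<in> principal a" using principal_mem[of a 0] by simp
next
  fix x y assume "x \<in> principal a" "y \<in> principal a"
  then obtain r s where "x = a * r" "y = a * s" unfolding principal_def by auto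
  then have "x + y = a * (r + s)" by (simp add: algebra_simps)
  then show "x + y \<in> principal a" using principal_mem by simp
next
  fix r x assume "x \<in> principal a"
  then obtain s where "x = a * s" unfolding principal_def by auto
  then have "r * x = a * (r * s)" by (simp add: algebra_simps)
  then show "r * x \<in> principal a" using principal_mem by simp
qed

lemma pow_in: "f \<in> I \<Longrightarrow> f ^ n \<in> ideal_pow I n"
  by (induction n) (auto intro: ideal_mult_in)

lemma principal_pow: "ideal_pow (principal d) t = principal (d ^ t)"
proof (induction t)
  case 0 then show ?case by (auto simp: principal_def)
next
  case (Suc n)
  have "ideal_mult (principal d) (principal (d ^ n)) = principal (d ^ Suc n)"
  proof
    show "ideal_mult (principal d) (principal (d ^ n)) \<subseteq> principal (d ^ Suc n)"
      unfolding ideal_mult_def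
    proof (rule ideal_of_min[OF principal_ideal], clarify)
      fix x y assume "x \<in> principal d" "y \<in> principal (d ^ n)"
      then obtain r s where "x = d * r" "y = d ^ n * s" by (auto simp: principal_def)
      then have "x * y = d ^ Suc n * (r * s)" by (simp add: algebra_simps)
      then show "x * y \<in> principal (d ^ Suc n)" by (auto simp: principal_def)
    qed
  next
    show "principal (d ^ Suc n) \<subseteq> ideal_mult (principal d) (principal (d ^ n))"
    proof
      fix x assume "x \<in> principal (d ^ Suc n)"
      then obtain r where "x = d * (d ^ n * r)" by (auto simp: principal_def algebra_simps)
      moreover have "d \<in> principal d" unfolding principal_def
        by (rule CollectI, rule exI[of _ 1]) simp
      moreover have "d ^ n * r \<in> principal (d ^ n)" unfolding principal_def by blast
      ultimately show "x \<in> ideal_mult (principal d) (principal (d ^ n))"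
        using ideal_mult_in by metis
    qed
  qed
  then show ?case using Suc by simp
qed

lemma decomp:
  fixes I :: "'a::comm_ring_1 poly set"
  assumes I: "is_ideal I" and fI: "f \<in> I"
    and gen: "\<forall>x\<in>I. \<exists>q h. x = f * q + smult d h"
  shows "p \<in> ideal_pow I (Suc n) \<Longrightarrow> \<exists>g w. p = f ^ Suc n * g + smult d w \<and> w \<in> ideal_pow I n"
proof (induction n arbitrary: p)
  case 0
  then have "p \<in> I" using ideal_mult_sub[OF I] by auto
  then obtain q h where "p = f * q + smult d h" using gen by blast
  then show ?case by auto
next
  case (Suc m)
  define S where "S = {f ^ Suc (Suc m) * g + smult d w | g w. w \<in> ideal_pow I (Suc m)}"
  have JI: "is_ideal (ideal_pow I (Suc m))" by (rule ideal_pow_ideal)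
  have "is_ideal S"
    unfolding is_ideal_def S_def
  proof (intro conjI ballI allI impI)
    show "0 \<in> {f ^ Suc (Suc m) * g + smult d w |g w. w \<in> ideal_pow I (Suc m)}"
      using ideal_0[OF JI] by (intro CollectI exI[of _ 0]) auto
  next
    fix x y assume "x \<in> {f ^ Suc (Suc m) * g + smult d w |g w. w \<in> ideal_pow I (Suc m)}"
      "y \<in> {f ^ Suc (Suc m) * g + smult d w |g w. w \<in> ideal_pow I (Suc m)}"
    then obtain g1 w1 g2 w2 where "x = f ^ Suc (Suc m) * g1 + smult d w1" "w1 \<in> ideal_pow I (Suc m)"
      "y = f ^ Suc (Suc m) * g2 + smult d w2" "w2 \<in> ideal_pow I (Suc m)" by blast
    then have "x + y = f ^ Suc (Suc m) * (g1 + g2) + smult d (w1 + w2)" "w1 + w2 \<in> ideal_pow I (Suc m)"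
      using ideal_add[OF JI] by (auto simp: algebra_simps smult_add_right)
    then show "x + y \<in> {f ^ Suc (Suc m) * g + smult d w |g w. w \<in> ideal_pow I (Suc m)}"
      by blast
  next
    fix r x assume "x \<in> {f ^ Suc (Suc m) * g + smult d w |g w. w \<in> ideal_pow I (Suc m)}"
    then obtain g1 w1 where "x = f ^ Suc (Suc m) * g1 + smult d w1" and w1: "w1 \<in> ideal_pow I (Suc m)" by blast
    have "r * w1 \<in> ideal_pow I (Suc m)" by (rule ideal_mulL[OF JI w1])
    with \<open>x = _\<close> have "r * x = f ^ Suc (Suc m) * (r * g1) + smult d (r * w1)" "r * w1 \<in> ideal_pow I (Suc m)"
      using ideal_mulL[OF JI] by (simp_all add: algebra_simps mult_smult_right)
    then show "r * x \<in> {f ^ Suc (Suc m) * g + smult d w |g w. w \<in> ideal_pow I (Suc m)}"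
      by blast
  qed
  moreover have "{x * y | x y. x \<in> I \<and> y \<in> ideal_pow I (Suc m)} \<subseteq> S"
  proof clarify
    fix x y assume x: "x \<in> I" and y: "y \<in> ideal_pow I (Suc m)"
    obtain q h where xq: "x = f * q + smult d h" using gen x by blast
    obtain g' w' where yq: "y = f ^ Suc m * g' + smult d w'" "w' \<in> ideal_pow I m"
      using Suc.IH[OF y] by blast
    have "f * (q * w') \<in> ideal_pow I (Suc m)"
      using ideal_mult_in[OF fI ideal_mulL[OF ideal_pow_ideal yq(2)]] by simp
    moreover have "h * y \<in> ideal_pow I (Suc m)" using ideal_mulL[OF JI y] .
    ultimately have w: "f * (q * w') + h * y \<in> ideal_pow I (Suc m)" using ideal_add[OF JI] by blast
    have "x * y = f ^ Suc (Suc m) * (q * g') + smult d (f * (q * w') + h * y)"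
      unfolding xq yq(1) by (simp add: algebra_simps mult_smult_left mult_smult_right smult_add_right)
    then show "x * y \<in> S" unfolding S_def using w by blast
  qed
  ultimately have "ideal_pow I (Suc (Suc m)) \<subseteq> S"
    by (simp add: ideal_mult_def ideal_of_min)
  then show ?case using Suc.prems unfolding S_def by auto
qed

theorem theorem3p3:
  fixes I :: "'a::idom poly set" and d :: 'a
  assumes "is_PID TYPE('a)"
    and "is_ideal I"
    and "contr I = principal d"
    and "\<exists>f. image_generated_by I d f \<and> nzd_mod d f"
  shows "power_stable I"
proof -
  note I = assms(2)
  obtain f0 where ig: "image_generated_by I d f0" and nz0: "nzd_mod d f0" using assms(4) by blast
  have "d \<in> principal d" unfolding principal_def
    by (rule CollectI, rule exI[of _ 1]) simp
  then have dI: "[:d:] \<in> I" using assms(3) unfolding contr_def by blast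
  have sdI: "smult d h \<in> I" for h
    using ideal_mulL[OF I dI, of h] by (simp add: mult.commute)
  have "f0 * 1 + smult d 0 \<in> {f0 * q + b | q b. b \<in> dRX d}" unfolding dRX_def by blast
  then have "f0 \<in> {a + b | a b. a \<in> I \<and> b \<in> dRX d}" using ig unfolding image_generated_by_def by simp
  then obtain f h0 where fI: "f \<in> I" and f0: "f0 = f + smult d h0" unfolding dRX_def by blast
  have gen: "\<forall>x\<in>I. \<exists>q h. x = f * q + smult d h"
  proof
    fix x assume "x \<in> I"
    then have "x + smult d 0 \<in> {a + b | a b. a \<in> I \<and> b \<in> dRX d}" unfolding dRX_def by blast
    then have "x \<in> {f0 * q + b | q b. b \<in> dRX d}" using ig unfolding image_generated_by_def by simp
    then obtain q h where "x = f0 * q + smult d h" unfolding dRX_def by blast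
    then have "x = f * q + smult d (h0 * q + h)"
      by (simp add: f0 algebra_simps smult_add_right mult_smult_left)
    then show "\<exists>q h. x = f * q + smult d h" by blast
  qed
  have nz: "g * f \<in> dRX d \<Longrightarrow> g \<in> dRX d" for g
  proof -
    assume "g * f \<in> dRX d"
    then obtain k where "g * f = smult d k" unfolding dRX_def by blast
    then have "g * f0 = smult d (k + g * h0)"
      by (simp add: f0 algebra_simps smult_add_right mult_smult_right)
    then show ?thesis using nz0 unfolding nzd_mod_def dRX_def by blast
  qed
  have nzp: "g * f ^ n \<in> dRX d \<Longrightarrow> g \<in> dRX d" for g n
  proof (induction n arbitrary: g)
    case 0 then show ?case by simp
  next
    case (Suc n)
    then have "(g * f ^ n) * f \<in> dRX d" by (simp add: algebra_simps)
    then show ?case using Suc.IH nz by blast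
  qed
  have main: "contr (ideal_pow I t) = principal (d ^ t)" for t
  proof (induction t)
    case 0 then show ?case by (auto simp: contr_def principal_def)
  next
    case (Suc n)
    show ?case
    proof
      show "principal (d ^ Suc n) \<subseteq> contr (ideal_pow I (Suc n))"
      proof
        fix c assume "c \<in> principal (d ^ Suc n)"
        then obtain r where c: "c = d ^ Suc n * r" by (auto simp: principal_def)
        have "[:d:] ^ Suc n * [:r:] \<in> ideal_pow I (Suc n)"
          using ideal_mulR[OF ideal_pow_ideal pow_in[OF dI]] by blast
        moreover have "[:d:] ^ Suc n * [:r:] = [:c:]" unfolding c
          by (simp add: poly_const_pow)
        ultimately show "c \<in> contr (ideal_pow I (Suc n))" by (simp add: contr_def)
      qed
    next
      show "contr (ideal_pow I (Suc n)) \<subseteq> principal (d ^ Suc n)"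
      proof
        fix c assume "c \<in> contr (ideal_pow I (Suc n))"
        then have cI: "[:c:] \<in> ideal_pow I (Suc n)" by (simp add: contr_def)
        obtain g w where gw: "[:c:] = f ^ Suc n * g + smult d w" "w \<in> ideal_pow I n"
          using decomp[OF I fI gen cI] by blast
        have "[:c:] \<in> I" using cI ideal_mult_sub[OF I] by auto
        then have "c \<in> principal d" using assms(3) unfolding contr_def by blast
        then obtain r where cr: "c = d * r" by (auto simp: principal_def)
        have "g * f ^ Suc n = smult d ([:r:] - w)"
          using gw(1) by (simp add: cr algebra_simps smult_diff_right)
        then have "g * f ^ Suc n \<in> dRX d" unfolding dRX_def by blast
        then obtain g2 where g2: "g = smult d g2" using nzp unfolding dRX_def by blast
        define w' where "w' = f ^ Suc n * g2 + w"
        have "f ^ Suc n * g2 \<in> ideal_pow I n"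
        proof -
          have "f ^ n \<in> ideal_pow I n" by (rule pow_in[OF fI])
          then have "f ^ n * (f * g2) \<in> ideal_pow I n" by (rule ideal_mulR[OF ideal_pow_ideal])
          then show ?thesis by (simp add: algebra_simps)
        qed
        then have w'I: "w' \<in> ideal_pow I n" unfolding w'_def using ideal_add[OF ideal_pow_ideal] gw(2) by blast
        have cw: "[:c:] = smult d w'" unfolding w'_def using gw(1)
          by (simp add: g2 algebra_simps smult_add_right mult_smult_right)
        show "c \<in> principal (d ^ Suc n)"
        proof (cases "d = 0")
          case True then show ?thesis using cr by (auto simp: principal_def)
        next
          case False
          have "\<forall>k>0. coeff w' k = 0"
          proof (intro allI impI)
            fix k :: nat assume "k > 0"
            then have "coeff [:c:] k = 0" by (cases k) auto
            then show "coeff w' k = 0" using cw False by simp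
          qed
          then have "w' = [:coeff w' 0:]"
          proof (intro poly_eqI)
            fix k show "coeff w' k = coeff [:coeff w' 0:] k"
              using \<open>\<forall>k>0. coeff w' k = 0\<close> by (cases k) auto
          qed
          then have "[:coeff w' 0:] \<in> ideal_pow I n" using w'I by simp
          then have "coeff w' 0 \<in> principal (d ^ n)" using Suc.IH unfolding contr_def by blast
          then obtain s where "coeff w' 0 = d ^ n * s" by (auto simp: principal_def)
          moreover have "c = d * coeff w' 0" using arg_cong[OF cw, of "\<lambda>p. coeff p 0"] by simp
          ultimately show ?thesis by (auto simp: principal_def algebra_simps)
        qed
      qed
    qed
  qed
  show ?thesis unfolding power_stable_def assms(3) main principal_pow by simp
qed

end
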